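(* Let $f:\mathbb R^n\to\mathbb R$ be a non-degenerate polynomial with $f(0)=0$, and write $\mathbf 1=(1,\dots,1)$. (i) If $\mathbf 1\notin\Gamma_+(f)$, then $L_e(f)>0$. (ii) If $\mathbf 1\in\Gamma(f)$, then $L_e(f)=0$ and $\Gamma^{(1)}_{\max}(f)\neq\emptyset$. (iii) If $\mathbf 1$ lies in the interior of $\Gamma_+(f)$, then $L_e(f)=0$ and $\Gamma^{(1)}_{\max}(f)=\emptyset$.
   Context: Write $f=\sum_\nu c_\nu x^\nu$. $\Gamma_+(f)$ (Newton polyhedron) is the convex hull of $\bigcup_{c_\nu\ne0}(\nu+\mathbb R^n_{\ge0})$; $\Gamma(f)$ (Newton boundary) is the union of its compact faces. For $a\in\mathbb R^n_{\ge0}$: $m_f(a)=\min\{\langle a,\nu\rangle:\nu\in\Gamma_+(f)\}$, $\gamma_f(a)=\{\nu\in\Gamma_+(f):\langle a,\nu\rangle=m_f(a)\}$, $s(a)=\sum_ia_i$, $h(a)=m_f(a)-s(a)$. For a face $\gamma$, $f_\gamma=\sum_{\nu\in\gamma}c_\nu x^\nu$; $f$ is non-degenerate if for every compact face $\gamma$, $\nabla f_\gamma$ does not vanish at points of $(\mathbb R^* )^n$ where $f_\gamma=0$. Dual Newton polyhedron: on $\mathbb R^n_{\ge0}$ put $a\sim b$ iff $\gamma_f(a)=\gamma_f(b)$; the equivalence classes give a subdivision of $\mathbb R^n_{\ge0}$ into cones. $\Gamma^{(1)}(f)$ is the set of primitive integer generators of the one-dimensional cones of this subdivision, and $\Gamma^{(1)}_+(f)=\{a\in\Gamma^{(1)}(f):m_f(a)>0\}$.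 The leading exponent is $L_e(f)=\sup\bigl(\{0\}\cup\{1-s(a)/m_f(a):a\in\Gamma^{(1)}_+(f)\}\bigr)$, and $\Gamma^{(1)}_{\max}(f)=\{a\in\Gamma^{(1)}_+(f):1-s(a)/m_f(a)=L_e(f)\}$. *)

theory Defs
  imports "HOL-Analysis.Analysis"
begin

text \<open>A real polynomial in the variables indexed by the finite type 'n is given by its
coefficient function c on exponent vectors ('n \<Rightarrow> nat); only finitely many
coefficients are non-zero.\<close>

definition supp :: "(('n::finite \<Rightarrow> nat) \<Rightarrow> real) \<Rightarrow> ('n \<Rightarrow> nat) set" where
  "supp c = {\<nu>. c \<nu> \<noteq> 0}"

definition expv :: "('n::finite \<Rightarrow> nat) \<Rightarrow> real^'n" where
  "expv \<nu> = (\<chi> i. real (\<nu> i))"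

definition peval :: "(('n::finite \<Rightarrow> nat) \<Rightarrow> real) \<Rightarrow> real^'n \<Rightarrow> real" where
  "peval c x = (\<Sum>\<nu>\<in>supp c. c \<nu> * (\<Prod>i\<in>UNIV. (x $ i) ^ (\<nu> i)))"

definition nonneg :: "real^'n::finite \<Rightarrow> bool" where
  "nonneg a \<longleftrightarrow> (\<forall>i. 0 \<le> a $ i)"

definition newton_polyhedron :: "(('n::finite \<Rightarrow> nat) \<Rightarrow> real) \<Rightarrow> (real^'n) set" where
  "newton_polyhedron c =
     convex hull (\<Union>\<nu>\<in>supp c. {expv \<nu> + v | v. nonneg v})"

definition newton_boundary :: "(('n::finite \<Rightarrow> nat) \<Rightarrow> real) \<Rightarrow> (real^'n) set" where
  "newton_boundary c =
     \<Union>{\<gamma>. \<gamma> face_of newton_polyhedron c \<and> compact \<gamma>}"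

definition mf :: "(('n::finite \<Rightarrow> nat) \<Rightarrow> real) \<Rightarrow> real^'n \<Rightarrow> real" where
  "mf c a = Inf {a \<bullet> v | v. v \<in> newton_polyhedron c}"

definition gammaf :: "(('n::finite \<Rightarrow> nat) \<Rightarrow> real) \<Rightarrow> real^'n \<Rightarrow> (real^'n) set" where
  "gammaf c a = {v \<in> newton_polyhedron c. a \<bullet> v = mf c a}"

definition sa :: "real^'n::finite \<Rightarrow> real" where
  "sa a = (\<Sum>i\<in>UNIV. a $ i)"

definition face_coeffs ::
  "(('n::finite \<Rightarrow> nat) \<Rightarrow> real) \<Rightarrow> (real^'n) set \<Rightarrow> ('n \<Rightarrow> nat) \<Rightarrow> real" where
  "face_coeffs c \<gamma> \<nu> = (if expv \<nu> \<in> \<gamma> then c \<nu> else 0)"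

definition partial :: "(real^'n::finite \<Rightarrow> real) \<Rightarrow> 'n \<Rightarrow> real^'n \<Rightarrow> real" where
  "partial g i x = deriv (\<lambda>t. g (\<chi> j. if j = i then t else x $ j)) (x $ i)"

definition nondegenerate :: "(('n::finite \<Rightarrow> nat) \<Rightarrow> real) \<Rightarrow> bool" where
  "nondegenerate c \<longleftrightarrow>
     (\<forall>\<gamma>. \<gamma> face_of newton_polyhedron c \<and> compact \<gamma> \<and> \<gamma> \<noteq> {} \<longrightarrow>
        (\<forall>x::real^'n. (\<forall>i. x $ i \<noteq> 0) \<and> peval (face_coeffs c \<gamma>) x = 0 \<longrightarrow>
           (\<exists>i. partial (peval (face_coeffs c \<gamma>)) i x \<noteq> 0)))"

definition primitive_int :: "real^'n::finite \<Rightarrow> bool" where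
  "primitive_int a \<longleftrightarrow> (\<forall>i. a $ i \<in> \<int>) \<and> a \<noteq> 0 \<and>
     (\<forall>t::real. 0 < t \<and> t < 1 \<longrightarrow> \<not> (\<forall>i. t * a $ i \<in> \<int>))"

text \<open>\<Gamma>^(1)(f): primitive generators of the one-dimensional cones of the dual subdivision,
i.e. nonnegative primitive integer a whose equivalence class (w.r.t. a ~ b iff
\<gamma>_f(a) = \<gamma>_f(b)) is the open ray through a.\<close>
definition gamma1 :: "(('n::finite \<Rightarrow> nat) \<Rightarrow> real) \<Rightarrow> (real^'n) set" where
  "gamma1 c = {a. nonneg a \<and> primitive_int a \<and>
     (\<forall>b. nonneg b \<and> gammaf c b = gammaf c a \<longrightarrow> (\<exists>t>0. b = t *\<^sub>R a))}"

definition gamma1_plus :: "(('n::finite \<Rightarrow> nat) \<Rightarrow> real) \<Rightarrow> (real^'n) set" where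
  "gamma1_plus c = {a \<in> gamma1 c. mf c a > 0}"

definition leading_exponent :: "(('n::finite \<Rightarrow> nat) \<Rightarrow> real) \<Rightarrow> real" where
  "leading_exponent c = Sup ({0} \<union> {1 - sa a / mf c a | a. a \<in> gamma1_plus c})"

definition gamma1_max :: "(('n::finite \<Rightarrow> nat) \<Rightarrow> real) \<Rightarrow> (real^'n) set" where
  "gamma1_max c = {a \<in> gamma1_plus c. 1 - sa a / mf c a = leading_exponent c}"

end

theory Submission imports Defs "HOL-Library.Set_Algebras" begin

definition Orth :: "(real^'n::finite) set" where "Orth = {v. nonneg v}"
definition UU :: "(('n::finite \<Rightarrow> nat) \<Rightarrow> real) \<Rightarrow> (real^'n) set" where "UU c = expv ` supp c"

lemma convex_Orth: "convex (Orth :: (real^'n::finite) set)"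
  unfolding Orth_def nonneg_def convex_def by (auto intro!: add_nonneg_nonneg)

lemma closed_Orth: "closed (Orth :: (real^'n::finite) set)"
proof -
  have "Orth = (\<Inter>i. {v::real^'n. 0 \<le> v $ i})" unfolding Orth_def nonneg_def by auto
  moreover have "closed {v::real^'n. 0 \<le> v $ i}" for i
    using closed_halfspace_ge[of 0 "axis i (1::real)"] by (simp add: cart_eq_inner_axis inner_commute)
  ultimately show ?thesis by (metis closed_INT)
qed

lemma gen_eq: "(\<Union>\<nu>\<in>supp c. {expv \<nu> + v | v. nonneg v}) = UU c + Orth"
  unfolding UU_def Orth_def set_plus_def by auto

lemma NP_eq: "newton_polyhedron c = convex hull (UU c) + Orth"
  unfolding newton_polyhedron_def gen_eq convex_hull_set_plus
  using convex_Orth hull_same by metis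

lemma inner_nonneg_nonneg: "nonneg x \<Longrightarrow> nonneg y \<Longrightarrow> 0 \<le> (x::real^'n::finite) \<bullet> y"
  unfolding nonneg_def inner_vec_def by (auto intro!: sum_nonneg)

lemma nonneg_axis: "nonneg (axis i (1::real))"
  unfolding nonneg_def axis_def by auto

lemma inner_axis1: "(x::real^'n::finite) \<bullet> axis i 1 = x $ i"
  by (simp add: cart_eq_inner_axis)

lemma U_nonneg: "u \<in> UU c \<Longrightarrow> nonneg u"
  unfolding UU_def nonneg_def expv_def by auto

lemma hullU_nonneg: "h \<in> convex hull (UU c) \<Longrightarrow> nonneg h"
proof -
  have "convex hull (UU c) \<subseteq> Orth"
    using convex_Orth U_nonneg unfolding Orth_def by (intro hull_minimal) auto
  then show "h \<in> convex hull (UU c) \<Longrightarrow> nonneg h" unfolding Orth_def by auto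
qed

lemma nonneg_add: "nonneg x \<Longrightarrow> nonneg y \<Longrightarrow> nonneg ((x::real^'n::finite) + y)"
  unfolding nonneg_def by auto

lemma P_nonneg: "v \<in> newton_polyhedron c \<Longrightarrow> nonneg v"
  unfolding NP_eq set_plus_def Orth_def using hullU_nonneg nonneg_add by blast

lemma P_plus: "v \<in> newton_polyhedron c \<Longrightarrow> nonneg w \<Longrightarrow> v + w \<in> newton_polyhedron c"
proof -
  assume v: "v \<in> newton_polyhedron c" and w: "nonneg w"
  then obtain h o1 where "h \<in> convex hull (UU c)" "nonneg o1" "v = h + o1"
    unfolding NP_eq set_plus_def Orth_def by auto
  then show ?thesis unfolding NP_eq set_plus_def Orth_def
    using w by (auto simp: add.assoc intro!: bexI[of _ h] exI[of _ "o1 + w"] nonneg_add)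
qed

lemma U_sub_P: "u \<in> UU c \<Longrightarrow> u \<in> newton_polyhedron c"
proof -
  assume u: "u \<in> UU c"
  have "nonneg (0::real^'n)" by (simp add: nonneg_def)
  then show ?thesis unfolding NP_eq set_plus_def Orth_def
    using u by (auto intro!: bexI[of _ u] hull_inc exI[of _ 0])
qed

definition mv :: "(('n::finite \<Rightarrow> nat) \<Rightarrow> real) \<Rightarrow> real^'n \<Rightarrow> real" where
  "mv c x = Min ((\<lambda>u. x \<bullet> u) ` UU c)"

definition Sset :: "(('n::finite \<Rightarrow> nat) \<Rightarrow> real) \<Rightarrow> real^'n \<Rightarrow> (real^'n) set" where
  "Sset c x = {u \<in> UU c. x \<bullet> u = mv c x}"

definition Zset :: "real^'n::finite \<Rightarrow> 'n set" where
  "Zset x = {i. x $ i = 0}"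

definition Wset :: "(('n::finite \<Rightarrow> nat) \<Rightarrow> real) \<Rightarrow> real^'n \<Rightarrow> (real^'n) set" where
  "Wset c x = (\<lambda>i. axis i 1) ` Zset x \<union> (\<lambda>(u,u'). u - u') ` (Sset c x \<times> Sset c x)"

definition Eset :: "(('n::finite \<Rightarrow> nat) \<Rightarrow> real) \<Rightarrow> real^'n \<Rightarrow> (real^'n) set" where
  "Eset c x = {d. \<forall>w\<in>Wset c x. w \<bullet> d = 0}"

lemma Eset_iff: "d \<in> Eset c x \<longleftrightarrow> (\<forall>i\<in>Zset x. d $ i = 0) \<and> (\<forall>u\<in>Sset c x. \<forall>u'\<in>Sset c x. d \<bullet> u = d \<bullet> u')"
proof -
  have "d \<in> Eset c x \<longleftrightarrow> (\<forall>i\<in>Zset x. axis i 1 \<bullet> d = 0) \<and> (\<forall>u\<in>Sset c x. \<forall>u'\<in>Sset c x. (u - u') \<bullet> d = 0)"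
    unfolding Eset_def Wset_def by auto
  also have "\<dots> \<longleftrightarrow> (\<forall>i\<in>Zset x. d $ i = 0) \<and> (\<forall>u\<in>Sset c x. \<forall>u'\<in>Sset c x. d \<bullet> u = d \<bullet> u')"
    by (simp add: inner_diff_left inner_diff_right inner_commute[of "axis _ 1"] inner_axis1 inner_commute[of _ d])
  finally show ?thesis .
qed

lemma Eset_diff: "d \<in> Eset c x \<Longrightarrow> e \<in> Eset c x \<Longrightarrow> d - e \<in> Eset c x"
  unfolding Eset_def mem_Collect_eq by (simp add: inner_diff_right)
lemma Eset_scale: "d \<in> Eset c x \<Longrightarrow> t *\<^sub>R d \<in> Eset c x"
  unfolding Eset_def mem_Collect_eq by (simp add: inner_scaleR_right)
lemma Eset_self: "x \<in> Eset c x"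
  unfolding Eset_iff Zset_def Sset_def by auto

context
  fixes c :: "('n::finite \<Rightarrow> nat) \<Rightarrow> real"
  assumes fin: "finite (supp c)" and ne: "supp c \<noteq> {}"
begin

lemma fin_U: "finite (UU c)" using fin unfolding UU_def by auto
lemma ne_U: "UU c \<noteq> {}" using ne unfolding UU_def by auto

lemma mv_le: "u \<in> UU c \<Longrightarrow> mv c x \<le> x \<bullet> u"
  unfolding mv_def using fin_U by auto

lemma mv_att: "\<exists>u\<in>UU c. x \<bullet> u = mv c x"
proof -
  have "mv c x \<in> (\<lambda>u. x \<bullet> u) ` UU c" unfolding mv_def using fin_U ne_U by (intro Min_in) auto
  then show ?thesis by auto
qed

lemma Sset_ne: "\<exists>u. u \<in> Sset c x"
  using mv_att unfolding Sset_def by auto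

lemma mv_eqI: "u0 \<in> UU c \<Longrightarrow> (\<And>u. u \<in> UU c \<Longrightarrow> x \<bullet> u0 \<le> x \<bullet> u) \<Longrightarrow> mv c x = x \<bullet> u0"
proof -
  assume u0: "u0 \<in> UU c" and H: "\<And>u. u \<in> UU c \<Longrightarrow> x \<bullet> u0 \<le> x \<bullet> u"
  obtain u where "u \<in> UU c" "x \<bullet> u = mv c x" using mv_att by blast
  then have "x \<bullet> u0 \<le> mv c x" using H by force
  moreover have "mv c x \<le> x \<bullet> u0" using mv_le u0 by blast
  ultimately show ?thesis by linarith
qed

lemma mv_lower_hull: "h \<in> convex hull (UU c) \<Longrightarrow> mv c x \<le> x \<bullet> h"
proof -
  have "convex hull (UU c) \<subseteq> {y. mv c x \<le> x \<bullet> y}"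
    by (rule hull_minimal) (auto simp: mv_le convex_halfspace_ge)
  then show "h \<in> convex hull (UU c) \<Longrightarrow> mv c x \<le> x \<bullet> h" by auto
qed

lemma mv_lower_P: "nonneg x \<Longrightarrow> v \<in> newton_polyhedron c \<Longrightarrow> mv c x \<le> x \<bullet> v"
proof -
  assume x: "nonneg x" and v: "v \<in> newton_polyhedron c"
  then obtain h o1 where h: "h \<in> convex hull (UU c)" "nonneg o1" "v = h + o1"
    unfolding NP_eq set_plus_def Orth_def by auto
  have "mv c x \<le> x \<bullet> h" using mv_lower_hull h by auto
  moreover have "0 \<le> x \<bullet> o1" using inner_nonneg_nonneg x h by auto
  ultimately show ?thesis using h by (simp add: inner_add_right)
qed

lemma mf_eq: "nonneg x \<Longrightarrow> mf c x = mv c x"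
proof -
  assume x: "nonneg x"
  obtain u where u: "u \<in> UU c" "x \<bullet> u = mv c x" using mv_att by blast
  have "u \<in> newton_polyhedron c" using u(1) by (rule U_sub_P)
  then have "mv c x \<in> {x \<bullet> v |v. v \<in> newton_polyhedron c}" using u(2) by force
  moreover have "\<And>y. y \<in> {x \<bullet> v |v. v \<in> newton_polyhedron c} \<Longrightarrow> mv c x \<le> y"
  proof -
    fix y assume "y \<in> {x \<bullet> v |v. v \<in> newton_polyhedron c}"
    then obtain v where "v \<in> newton_polyhedron c" "y = x \<bullet> v" by blast
    then show "mv c x \<le> y" using mv_lower_P[OF x] by simp
  qed
  ultimately show ?thesis unfolding mf_def by (rule cInf_eq_minimum)
qed

lemma P_ne: "newton_polyhedron c \<noteq> {}" using U_sub_P ne_U by blast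

lemma gammaf_eq: "nonneg x \<Longrightarrow> gammaf c x = {v \<in> newton_polyhedron c. x \<bullet> v = mv c x}"
  unfolding gammaf_def using mf_eq by simp

lemma gammaf_0: "gammaf c 0 = newton_polyhedron c"
proof -
  obtain v0 where v0: "v0 \<in> newton_polyhedron c" using P_ne by blast
  have e: "{(0::real^'n) \<bullet> v |v. v \<in> newton_polyhedron c} = {0}"
  proof
    show "{(0::real^'n) \<bullet> v |v. v \<in> newton_polyhedron c} \<subseteq> {0}" by auto
    show "{0} \<subseteq> {(0::real^'n) \<bullet> v |v. v \<in> newton_polyhedron c}" using v0 by force
  qed
  have m: "mf c 0 = 0" unfolding mf_def e by (rule cInf_singleton)
  show ?thesis unfolding gammaf_def m by simp
qed

lemma claim1:
  assumes a: "nonneg a" and b: "nonneg b" and g: "gammaf c b = gammaf c a"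
  shows "b \<in> Eset c a"
proof -
  have S: "b \<bullet> u = mv c b" if "u \<in> Sset c a" for u
  proof -
    have "u \<in> gammaf c a" using that a by (auto simp: gammaf_eq Sset_def U_sub_P)
    then have "u \<in> gammaf c b" using g by simp
    then show ?thesis using b by (simp add: gammaf_eq)
  qed
  have Z: "b $ i = 0" if "i \<in> Zset a" for i
  proof -
    obtain u where u: "u \<in> Sset c a" using Sset_ne by blast
    have "u + axis i 1 \<in> gammaf c a" using u that a
      by (auto simp: gammaf_eq Sset_def U_sub_P P_plus nonneg_axis inner_add_right inner_axis1 Zset_def)
    then have "u + axis i 1 \<in> gammaf c b" using g by simp
    then have "b \<bullet> (u + axis i 1) = mv c b" using b by (simp add: gammaf_eq)
    then show ?thesis using S[OF u] by (simp add: inner_add_right inner_axis1)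
  qed
  show ?thesis unfolding Eset_iff using S Z by auto
qed

lemma claim_nz:
  assumes a: "nonneg a" "a \<noteq> 0" and g: "gammaf c b = gammaf c a"
  shows "b \<noteq> 0"
proof
  assume "b = 0"
  then have g2: "gammaf c a = newton_polyhedron c" using g gammaf_0 by simp
  obtain i where i: "a $ i \<noteq> 0" using a(2) by (auto simp: vec_eq_iff)
  have "0 \<le> a $ i" using a(1) nonneg_def by blast
  then have ai: "a $ i > 0" using i by linarith
  obtain u where u: "u \<in> UU c" "a \<bullet> u = mv c a" using mv_att by blast
  have "u + axis i 1 \<in> newton_polyhedron c" using u by (simp add: U_sub_P P_plus nonneg_axis)
  then have "u + axis i 1 \<in> gammaf c a" using g2 by simp
  then have "a \<bullet> (u + axis i 1) = mv c a" using a(1) by (simp add: gammaf_eq)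
  then show False using u ai by (simp add: inner_add_right inner_axis1)
qed

end


lemma aux_neg: fixes x y t :: real assumes "y < 0" "t \<le> - x / y" shows "0 \<le> x + t * y"
proof -
  have "(- x / y) * y \<le> t * y" by (rule mult_right_mono_neg) (use assms in auto)
  moreover have "(- x / y) * y = - x" using assms by simp
  ultimately show ?thesis by linarith
qed

context
  fixes c :: "('n::finite \<Rightarrow> nat) \<Rightarrow> real"
  assumes fin: "finite (supp c)" and ne: "supp c \<noteq> {}"
begin

lemma step:
  assumes b: "nonneg b" and d: "d \<in> Eset c b" and i0: "d $ i0 < 0" and bp: "b \<bullet> p > 0" and dp: "d \<bullet> p = 0"
  shows "\<exists>b'. nonneg b' \<and> Sset c b \<subseteq> Sset c b' \<and> Zset b \<subseteq> Zset b' \<and> b' \<bullet> p > 0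
           \<and> (Sset c b \<noteq> Sset c b' \<or> Zset b \<noteq> Zset b')"
proof -
  obtain u0 where u0: "u0 \<in> UU c" "b \<bullet> u0 = mv c b" using mv_att[OF fin ne] by blast
  have u0S: "u0 \<in> Sset c b" using u0 by (simp add: Sset_def)
  have dZ: "\<And>i. i \<in> Zset b \<Longrightarrow> d $ i = 0" and dS: "\<And>u u'. u \<in> Sset c b \<Longrightarrow> u' \<in> Sset c b \<Longrightarrow> d \<bullet> u = d \<bullet> u'"
    using d unfolding Eset_iff by blast+
  define T1 where "T1 = (\<lambda>i. - (b $ i) / (d $ i)) ` {i. d $ i < 0}"
  define T2 where "T2 = (\<lambda>u. - (b \<bullet> (u - u0)) / (d \<bullet> (u - u0))) ` {u \<in> UU c. d \<bullet> (u - u0) < 0}"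
  define T where "T = T1 \<union> T2"
  have finT: "finite T" unfolding T_def T1_def T2_def using fin_U[OF fin ne] by auto
  have neT: "T \<noteq> {}" unfolding T_def T1_def using i0 by auto
  have bpos: "b $ i > 0" if "d $ i < 0" for i
  proof -
    have "b $ i \<ge> 0" using b nonneg_def by blast
    moreover have "b $ i \<noteq> 0" using dZ[of i] that by (auto simp: Zset_def)
    ultimately show ?thesis by linarith
  qed
  have gpos: "b \<bullet> (u - u0) > 0" if "u \<in> UU c" "d \<bullet> (u - u0) < 0" for u
  proof -
    have "b \<bullet> u \<ge> mv c b" using mv_le[OF fin ne that(1)] .
    moreover have "b \<bullet> u \<noteq> mv c b"
    proof
      assume "b \<bullet> u = mv c b"
      then have "u \<in> Sset c b" using that(1) by (simp add: Sset_def)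
      then have "d \<bullet> u = d \<bullet> u0" using dS u0S by blast
      then show False using that(2) by (simp add: inner_diff_right)
    qed
    ultimately show ?thesis using u0 by (simp add: inner_diff_right)
  qed
  have Tpos: "t > 0" if "t \<in> T" for t
  proof (cases "t \<in> T1")
    case True
    then obtain i where i: "d $ i < 0" "t = - (b $ i) / (d $ i)" unfolding T1_def by blast
    have "- (b $ i) < 0" using bpos[OF i(1)] by linarith
    then show ?thesis unfolding i(2) using i(1) by (rule divide_neg_neg)
  next
    case False
    then have "t \<in> T2" using that unfolding T_def by blast
    then obtain u where u: "u \<in> UU c" "d \<bullet> (u - u0) < 0" "t = - (b \<bullet> (u - u0)) / (d \<bullet> (u - u0))"
      unfolding T2_def by blast
    have "- (b \<bullet> (u - u0)) < 0" using gpos[OF u(1,2)] by linarith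
    then show ?thesis unfolding u(3) using u(2) by (rule divide_neg_neg)
  qed
  define t0 where "t0 = Min T"
  have t0T: "t0 \<in> T" unfolding t0_def using finT neT by (rule Min_in)
  have t0le: "t0 \<le> t" if "t \<in> T" for t unfolding t0_def using finT that by simp
  have t0pos: "t0 > 0" using Tpos t0T by blast
  define b' where "b' = b + t0 *\<^sub>R d"
  have b'i: "b' $ i = b $ i + t0 * d $ i" for i unfolding b'_def by simp
  have b'u: "b' \<bullet> (u - u0) = b \<bullet> (u - u0) + t0 * (d \<bullet> (u - u0))" for u
    unfolding b'_def by (simp add: inner_add_left)
  have nn: "nonneg b'"
    unfolding nonneg_def
  proof
    fix i
    show "0 \<le> b' $ i"
    proof (cases "d $ i < 0")
      case True
      then have "- (b $ i) / (d $ i) \<in> T" unfolding T_def T1_def by blast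
      then have "t0 \<le> - (b $ i) / (d $ i)" by (rule t0le)
      then show ?thesis using aux_neg[OF True] b'i by simp
    next
      case False
      then show ?thesis using b t0pos b'i unfolding nonneg_def
        by (simp add: add_nonneg_nonneg)
    qed
  qed
  have gap: "b' \<bullet> (u - u0) \<ge> 0" if "u \<in> UU c" for u
  proof (cases "d \<bullet> (u - u0) < 0")
    case True
    then have "- (b \<bullet> (u - u0)) / (d \<bullet> (u - u0)) \<in> T" using that unfolding T_def T2_def by blast
    then have "t0 \<le> - (b \<bullet> (u - u0)) / (d \<bullet> (u - u0))" by (rule t0le)
    then show ?thesis using aux_neg[OF True] b'u by simp
  next
    case False
    have "b \<bullet> (u - u0) \<ge> 0" using mv_le[OF fin ne that] u0 by (simp add: inner_diff_right)
    then show ?thesis using False t0pos b'u by simp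
  qed
  have mvb': "mv c b' = b' \<bullet> u0"
    using mv_eqI[OF fin ne u0(1)] gap by (simp add: inner_diff_right)
  have SS: "Sset c b \<subseteq> Sset c b'"
  proof
    fix u assume u: "u \<in> Sset c b"
    then have "b \<bullet> (u - u0) = 0" "d \<bullet> (u - u0) = 0"
      using u0 dS[OF u u0S] by (auto simp: Sset_def inner_diff_right)
    then have "b' \<bullet> (u - u0) = 0" using b'u by simp
    then show "u \<in> Sset c b'" using u mvb' by (simp add: Sset_def inner_diff_right)
  qed
  have ZZ: "Zset b \<subseteq> Zset b'"
    using dZ b'i by (auto simp: Zset_def)
  have b'p: "b' \<bullet> p > 0" using bp dp unfolding b'_def by (simp add: inner_add_left)
  have strict: "Sset c b \<noteq> Sset c b' \<or> Zset b \<noteq> Zset b'"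
  proof (cases "t0 \<in> T1")
    case True
    then obtain i where i: "d $ i < 0" "t0 = - (b $ i) / (d $ i)" unfolding T1_def by blast
    then have "b' $ i = 0" using b'i by simp
    moreover have "b $ i \<noteq> 0" using bpos[OF i(1)] by simp
    ultimately have "i \<in> Zset b'" "i \<notin> Zset b" by (auto simp: Zset_def)
    then show ?thesis by blast
  next
    case False
    then have "t0 \<in> T2" using t0T unfolding T_def by blast
    then obtain u where u: "u \<in> UU c" "d \<bullet> (u - u0) < 0" "t0 = - (b \<bullet> (u - u0)) / (d \<bullet> (u - u0))"
      unfolding T2_def by blast
    then have "b' \<bullet> (u - u0) = 0" using b'u by simp
    then have "u \<in> Sset c b'" using u(1) mvb' by (simp add: Sset_def inner_diff_right)
    moreover have "u \<notin> Sset c b" using gpos[OF u(1,2)] u0 by (simp add: Sset_def inner_diff_right)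
    ultimately show ?thesis by blast
  qed
  show ?thesis apply (rule exI[of _ b']) using nn SS ZZ b'p strict by simp
qed

end


definition ratv :: "real^'n::finite \<Rightarrow> bool" where "ratv x \<longleftrightarrow> (\<forall>i. x $ i \<in> \<rat>)"

lemma inner_rat: "ratv x \<Longrightarrow> ratv y \<Longrightarrow> (x::real^'n::finite) \<bullet> y \<in> \<rat>"
  unfolding inner_vec_def inner_real_def ratv_def by (intro Rats_sum Rats_mult) auto

lemma ratv_Basis: "q \<in> (Basis :: (real^'n::finite) set) \<Longrightarrow> ratv q"
  unfolding Basis_vec_def ratv_def by (auto simp: axis_def)

lemma rat_kernel:
  fixes W :: "(real^'n::finite) set"
  assumes "finite W" "\<forall>w\<in>W. ratv w"
  shows "\<exists>B. finite B \<and> (\<forall>q\<in>B. ratv q \<and> (\<forall>w\<in>W. w \<bullet> q = 0)) \<and> {x. \<forall>w\<in>W. w \<bullet> x = 0} \<subseteq> span B"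
  using assms
proof (induction W rule: finite_induct)
  case empty
  show ?case
    by (rule exI[of _ Basis]) (simp add: ratv_Basis span_Basis)
next
  case (insert w W)
  then obtain B where B: "finite B" "\<And>q. q \<in> B \<Longrightarrow> ratv q" "\<And>q w'. q \<in> B \<Longrightarrow> w' \<in> W \<Longrightarrow> w' \<bullet> q = 0"
    "{x. \<forall>w\<in>W. w \<bullet> x = 0} \<subseteq> span B" by auto
  have wr: "ratv w" using insert.prems by simp
  show ?case
  proof (cases "\<forall>q\<in>B. w \<bullet> q = 0")
    case True
    show ?thesis
      apply (rule exI[of _ B])
      using B True by auto
  next
    case False
    then obtain q1 where q1: "q1 \<in> B" "w \<bullet> q1 \<noteq> 0" by blast
    define g where "g q = q - ((w \<bullet> q) / (w \<bullet> q1)) *\<^sub>R q1" for q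
    have g_rat: "ratv (g q)" if "q \<in> B" for q
    proof -
      have r: "(w \<bullet> q) / (w \<bullet> q1) \<in> \<rat>"
        using inner_rat[OF wr B(2)[OF that]] inner_rat[OF wr B(2)[OF q1(1)]] by (rule Rats_divide)
      show ?thesis unfolding ratv_def
      proof
        fix i
        have e: "g q $ i = q $ i - ((w \<bullet> q) / (w \<bullet> q1)) * q1 $ i" unfolding g_def by simp
        have a: "q $ i \<in> \<rat>" using B(2)[OF that] ratv_def by blast
        have b: "q1 $ i \<in> \<rat>" using B(2)[OF q1(1)] ratv_def by blast
        show "g q $ i \<in> \<rat>" unfolding e by (rule Rats_diff[OF a Rats_mult[OF r b]])
      qed
    qed
    have g_orth: "w' \<bullet> g q = 0" if "q \<in> B" "w' \<in> insert w W" for q w'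
    proof (cases "w' = w")
      case True
      then show ?thesis using q1(2) unfolding g_def by (simp add: inner_diff_right)
    next
      case False
      then have "w' \<in> W" using that by simp
      then show ?thesis using B(3)[OF that(1)] B(3)[OF q1(1)] unfolding g_def
        by (simp add: inner_diff_right)
    qed
    have sp: "x \<in> span (g ` B)" if x: "\<forall>w'\<in>insert w W. w' \<bullet> x = 0" for x
    proof -
      have "x \<in> span B" using B(4) x by auto
      then obtain u where xu: "x = (\<Sum>v\<in>B. u v *\<^sub>R v)" using span_finite[OF B(1)] by auto
      have wx: "w \<bullet> x = 0" using x by simp
      have "w \<bullet> x = (\<Sum>v\<in>B. u v * (w \<bullet> v))" unfolding xu by (simp add: inner_sum_right)
      then have s0: "(\<Sum>v\<in>B. u v * (w \<bullet> v)) = 0" using wx by simp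
      have "(\<Sum>v\<in>B. u v *\<^sub>R g v) = (\<Sum>v\<in>B. u v *\<^sub>R v) - (\<Sum>v\<in>B. (u v * ((w \<bullet> v) / (w \<bullet> q1))) *\<^sub>R q1)"
        unfolding g_def by (simp add: scaleR_diff_right sum_subtractf)
      also have "(\<Sum>v\<in>B. (u v * ((w \<bullet> v) / (w \<bullet> q1))) *\<^sub>R q1) = ((\<Sum>v\<in>B. u v * (w \<bullet> v)) / (w \<bullet> q1)) *\<^sub>R q1"
        by (simp add: scaleR_sum_left[symmetric] sum_divide_distrib)
      also have "\<dots> = 0" using s0 by simp
      finally have "x = (\<Sum>v\<in>B. u v *\<^sub>R g v)" using xu by simp
      also have "\<dots> \<in> span (g ` B)"
        by (intro span_sum span_scale span_base) auto
      finally show ?thesis .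
    qed
    show ?thesis
      apply (rule exI[of _ "g ` B"])
      using B(1) g_rat g_orth sp by auto
  qed
qed

lemma rat_scale_int:
  assumes "ratv (q::real^'n::finite)"
  shows "\<exists>K::real. K > 0 \<and> (\<forall>i. K * q $ i \<in> \<int>)"
proof -
  have ex: "\<exists>n::nat. n > 0 \<and> real n * q $ i \<in> \<int>" for i
  proof -
    have "q $ i \<in> \<rat>" using assms ratv_def by blast
    then obtain a b where ab: "b > 0" "q $ i = of_int a / of_int b" by (rule Rats_cases')
    then have "real (nat b) * q $ i = of_int a" by simp
    then show ?thesis using ab(1) by (intro exI[of _ "nat b"]) auto
  qed
  define N where "N i = (SOME n::nat. n > 0 \<and> real n * q $ i \<in> \<int>)" for i
  have N: "N i > 0" "real (N i) * q $ i \<in> \<int>" for i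
    using someI_ex[OF ex[of i]] unfolding N_def by auto
  define K where "K = (\<Prod>i\<in>UNIV. real (N i))"
  have "K > 0" unfolding K_def using N(1) by (simp add: prod_pos)
  moreover have "K * q $ i \<in> \<int>" for i
  proof -
    have "K = real (N i) * (\<Prod>j\<in>UNIV - {i}. real (N j))"
      unfolding K_def by (simp add: prod.remove)
    then have "K * q $ i = (real (N i) * q $ i) * (\<Prod>j\<in>UNIV - {i}. real (N j))" by simp
    also have "\<dots> \<in> \<int>"
    proof -
      have P: "(\<Prod>j\<in>UNIV - {i}. real (N j)) \<in> \<int>" by (intro Ints_prod) auto
      show ?thesis using Ints_mult[OF N(2)[of i] P] .
    qed
    finally show ?thesis .
  qed
  ultimately show ?thesis by blast
qed

lemma int_to_prim:
  assumes zi: "\<forall>i. (z::real^'n::finite) $ i \<in> \<int>" and z0: "z \<noteq> 0"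
  shows "\<exists>s>0. primitive_int (s *\<^sub>R z)"
proof -
  obtain j where zj: "z $ j \<noteq> 0" using z0 by (auto simp: vec_eq_iff)
  define N where "N = \<bar>z $ j\<bar>"
  have Npos: "N > 0" using zj N_def by simp
  have "N \<in> \<int>" unfolding N_def using zi by (simp add: Ints_abs)
  then obtain m where m: "N = of_int m" by (rule Ints_cases)
  have "m \<ge> 0" using Npos m by simp
  then have n0: "real (nat m) = N" using m by simp
  define A where "A = {k::nat. 0 < k \<and> (\<forall>i. (real k / N) * z $ i \<in> \<int>)}"
  have "nat m \<in> A" unfolding A_def using n0 Npos zi by auto
  define k0 where "k0 = (LEAST k. k \<in> A)"
  have k0A: "k0 \<in> A" unfolding k0_def using \<open>nat m \<in> A\<close> by (rule LeastI)
  have k0pos: "k0 > 0" using k0A A_def by simp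
  define s where "s = real k0 / N"
  have spos: "s > 0" unfolding s_def using k0pos Npos by simp
  have prim: "primitive_int (s *\<^sub>R z)"
    unfolding primitive_int_def
  proof (intro conjI allI impI)
    show "(s *\<^sub>R z) $ i \<in> \<int>" for i using k0A unfolding A_def s_def by simp
    show "s *\<^sub>R z \<noteq> 0" using spos z0 by simp
    fix t :: real assume t: "0 < t \<and> t < 1"
    show "\<not> (\<forall>i. t * (s *\<^sub>R z) $ i \<in> \<int>)"
    proof
      assume H: "\<forall>i. t * (s *\<^sub>R z) $ i \<in> \<int>"
      have "\<bar>t * (s * z $ j)\<bar> = t * real k0"
        unfolding s_def N_def using t zj by (simp add: abs_mult)
      moreover have "\<bar>t * (s * z $ j)\<bar> \<in> \<int>" using H by (simp add: Ints_abs)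
      ultimately have ti: "t * real k0 \<in> \<int>" by simp
      then obtain mm where mm: "t * real k0 = of_int mm" by (rule Ints_cases)
      have "t * real k0 > 0" using t k0pos by simp
      then have "real_of_int mm > 0" using mm by simp
      then have mpos: "mm > 0" by simp
      have "t * real k0 < 1 * real k0" using t k0pos by (intro mult_strict_right_mono) auto
      then have mlt: "real (nat mm) < real k0" using mm mpos by simp
      have "nat mm \<in> A"
        unfolding A_def
      proof (intro CollectI conjI allI)
        show "0 < nat mm" using mpos by simp
        fix i
        have "(real (nat mm) / N) * z $ i = t * (s * z $ i)"
          using mm mpos unfolding s_def by simp
        then show "(real (nat mm) / N) * z $ i \<in> \<int>" using H by simp
      qed
      moreover have "nat mm < k0" using mlt by linarith
      ultimately show False unfolding k0_def using not_less_Least by blast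
    qed
  qed
  show ?thesis using spos prim by blast
qed



context
  fixes c :: "('n::finite \<Rightarrow> nat) \<Rightarrow> real"
  assumes fin: "finite (supp c)" and ne: "supp c \<noteq> {}"
begin

lemma finite_Sset: "finite (Sset c x)"
  using fin_U[OF fin ne] unfolding Sset_def by auto

lemma exists_ray:
  assumes b0: "nonneg b0" and p0: "b0 \<bullet> p > 0"
  shows "\<exists>b. nonneg b \<and> Sset c b0 \<subseteq> Sset c b \<and> Zset b0 \<subseteq> Zset b \<and> b \<bullet> p > 0
            \<and> (\<forall>d\<in>Eset c b. \<exists>t. d = t *\<^sub>R b)"
proof -
  define Q where "Q b \<longleftrightarrow> nonneg b \<and> Sset c b0 \<subseteq> Sset c b \<and> Zset b0 \<subseteq> Zset b \<and> b \<bullet> p > 0" for b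
  define f where "f b = card (Sset c b) + card (Zset b)" for b :: "real^'n"
  define N where "N = card (UU c) + CARD('n)"
  have fle: "f b \<le> N" for b
  proof -
    have "card (Sset c b) \<le> card (UU c)" using fin_U[OF fin ne] by (intro card_mono) (auto simp: Sset_def)
    moreover have "card (Zset b) \<le> CARD('n)" by (intro card_mono) auto
    ultimately show ?thesis unfolding f_def N_def by simp
  qed
  define M where "M = f ` {b. Q b}"
  have finM: "finite M" unfolding M_def by (rule finite_subset[of _ "{..N}"]) (use fle in auto)
  have neM: "M \<noteq> {}" using b0 p0 unfolding M_def Q_def by auto
  have "Max M \<in> M" using finM neM by (rule Max_in)
  then obtain b where Qb: "Q b" and fb: "f b = Max M" unfolding M_def by auto
  have maxb: "f b' \<le> f b" if "Q b'" for b'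
    unfolding fb using finM that unfolding M_def by (intro Max_ge) auto
  have bnn: "nonneg b" and bp: "b \<bullet> p > 0" using Qb Q_def by auto
  have ray: "\<exists>t. d = t *\<^sub>R b" if d: "d \<in> Eset c b" for d
  proof (rule ccontr)
    assume nd: "\<not> (\<exists>t. d = t *\<^sub>R b)"
    define d' where "d' = d - ((d \<bullet> p) / (b \<bullet> p)) *\<^sub>R b"
    have d'E: "d' \<in> Eset c b" unfolding d'_def by (intro Eset_diff d Eset_scale Eset_self)
    have d'p: "d' \<bullet> p = 0" unfolding d'_def using bp by (simp add: inner_diff_left)
    have "d' \<noteq> 0"
    proof
      assume "d' = 0"
      then have "d = ((d \<bullet> p) / (b \<bullet> p)) *\<^sub>R b" unfolding d'_def by simp
      then show False using nd by blast
    qed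
    then obtain i where i: "d' $ i \<noteq> 0" by (auto simp: vec_eq_iff)
    define e where "e = (if d' $ i < 0 then d' else (-1) *\<^sub>R d')"
    have eE: "e \<in> Eset c b" unfolding e_def using d'E Eset_scale[OF d'E, of "-1"] by (cases "d' $ i < 0") simp_all
    have ei: "e $ i < 0" unfolding e_def using i by auto
    have ep: "e \<bullet> p = 0" unfolding e_def using d'p by auto
    obtain b' where b': "nonneg b'" "Sset c b \<subseteq> Sset c b'" "Zset b \<subseteq> Zset b'" "b' \<bullet> p > 0"
      "Sset c b \<noteq> Sset c b' \<or> Zset b \<noteq> Zset b'"
      using step[OF fin ne bnn eE ei bp ep] by blast
    have "Q b'" using Qb b' unfolding Q_def by blast
    then have le: "f b' \<le> f b" by (rule maxb)
    have c1: "card (Sset c b) \<le> card (Sset c b')" using b'(2) finite_Sset by (intro card_mono)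
    have c2: "card (Zset b) \<le> card (Zset b')" using b'(3) by (intro card_mono) auto
    have "card (Sset c b) < card (Sset c b') \<or> card (Zset b) < card (Zset b')"
    proof (cases "Sset c b \<noteq> Sset c b'")
      case True
      then have "Sset c b \<subset> Sset c b'" using b'(2) by blast
      then show ?thesis using finite_Sset by (simp add: psubset_card_mono)
    next
      case False
      then have "Zset b \<subset> Zset b'" using b'(3,5) by blast
      then show ?thesis by (simp add: psubset_card_mono)
    qed
    then have "f b < f b'" unfolding f_def using c1 c2 by linarith
    then show False using le by linarith
  qed
  show ?thesis using Qb ray unfolding Q_def by blast
qed

lemma scale_SZ:
  assumes s: "s > 0"
  shows "Sset c (s *\<^sub>R b) = Sset c b" "Zset (s *\<^sub>R b) = Zset b"
proof -
  obtain u0 where u0: "u0 \<in> UU c" "b \<bullet> u0 = mv c b" using mv_att[OF fin ne] by blast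
  have "(s *\<^sub>R b) \<bullet> u0 \<le> (s *\<^sub>R b) \<bullet> u" if "u \<in> UU c" for u
    using mv_le[OF fin ne that, of b] u0 s by (simp add: mult_left_mono)
  then have mvs: "mv c (s *\<^sub>R b) = s * mv c b" using mv_eqI[OF fin ne u0(1)] u0 by simp
  show "Sset c (s *\<^sub>R b) = Sset c b" unfolding Sset_def mvs using s by auto
  show "Zset (s *\<^sub>R b) = Zset b" unfolding Zset_def using s by auto
qed

lemma Eset_cong: "Sset c a = Sset c b \<Longrightarrow> Zset a = Zset b \<Longrightarrow> Eset c a = Eset c b"
  unfolding Eset_def Wset_def by simp

lemma gamma1_exists:
  assumes b0: "nonneg b0" and p0: "b0 \<bullet> p > 0"
  shows "\<exists>a\<in>gamma1 c. Sset c b0 \<subseteq> Sset c a \<and> Zset b0 \<subseteq> Zset a \<and> a \<bullet> p > 0"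
proof -
  obtain b where b: "nonneg b" "Sset c b0 \<subseteq> Sset c b" "Zset b0 \<subseteq> Zset b" "b \<bullet> p > 0"
    and ray: "\<And>d. d \<in> Eset c b \<Longrightarrow> \<exists>t. d = t *\<^sub>R b"
    using exists_ray[OF b0 p0] by blast
  have bnz: "b \<noteq> 0" using b(4) by auto
  define W where "W = Wset c b"
  have finW: "finite W" unfolding W_def Wset_def using finite_Sset by auto
  have ratu: "ratv u" if "u \<in> UU c" for u
    using that unfolding UU_def expv_def ratv_def by auto
  have ratW: "\<forall>w\<in>W. ratv w"
  proof
    fix w assume "w \<in> W"
    then consider i where "w = axis i 1" | u u' where "u \<in> UU c" "u' \<in> UU c" "w = u - u'"
      unfolding W_def Wset_def Sset_def by auto
    then show "ratv w"
    proof cases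
      case 1 then show ?thesis unfolding ratv_def axis_def by auto
    next
      case 2 then show ?thesis using ratu[OF 2(1)] ratu[OF 2(2)] unfolding ratv_def by (auto intro: Rats_diff)
    qed
  qed
  obtain B where B: "finite B" "\<And>q. q \<in> B \<Longrightarrow> ratv q \<and> (\<forall>w\<in>W. w \<bullet> q = 0)"
    "{x. \<forall>w\<in>W. w \<bullet> x = 0} \<subseteq> span B"
    using rat_kernel[OF finW ratW] by blast
  have EW: "Eset c b = {x. \<forall>w\<in>W. w \<bullet> x = 0}" unfolding Eset_def W_def by simp
  have "b \<in> span B" using B(3) Eset_self[of b c] EW by blast
  have "\<exists>q\<in>B. q \<noteq> 0"
  proof (rule ccontr)
    assume "\<not> (\<exists>q\<in>B. q \<noteq> 0)"
    then have "B \<subseteq> {0}" by auto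
    then have "span B \<subseteq> span {0}" by (rule span_mono)
    then have "b \<in> span {0}" using \<open>b \<in> span B\<close> by blast
    then show False using bnz by simp
  qed
  then obtain q where q: "q \<in> B" "q \<noteq> 0" by blast
  have qE: "q \<in> Eset c b" using B(2)[OF q(1)] EW by simp
  obtain t where qt: "q = t *\<^sub>R b" using ray[OF qE] by blast
  have tnz: "t \<noteq> 0" using q(2) qt by auto
  obtain K where K: "K > 0" "\<And>i. K * q $ i \<in> \<int>" using rat_scale_int[of q] B(2)[OF q(1)] by blast
  define \<tau> where "\<tau> = K * t"
  have taunz: "\<tau> \<noteq> 0" unfolding \<tau>_def using K(1) tnz by simp
  define z where "z = \<bar>\<tau>\<bar> *\<^sub>R b"
  have zi: "\<forall>i. z $ i \<in> \<int>"
  proof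
    fix i
    have "K * q $ i = \<tau> * b $ i" unfolding \<tau>_def qt by simp
    then have "\<tau> * b $ i \<in> \<int>" using K(2)[of i] by simp
    then have "\<bar>\<tau> * b $ i\<bar> \<in> \<int>" by (rule Ints_abs)
    moreover have "z $ i = \<bar>\<tau>\<bar> * b $ i" unfolding z_def by simp
    moreover have "b $ i \<ge> 0" using b(1) nonneg_def by blast
    ultimately show "z $ i \<in> \<int>" by (simp add: abs_mult)
  qed
  have z0: "z \<noteq> 0" unfolding z_def using taunz bnz by simp
  obtain s where s: "s > 0" "primitive_int (s *\<^sub>R z)" using int_to_prim[OF zi z0] by blast
  define \<sigma> where "\<sigma> = s * \<bar>\<tau>\<bar>"
  have sig: "\<sigma> > 0" unfolding \<sigma>_def using s(1) taunz by simp
  define a where "a = \<sigma> *\<^sub>R b"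
  have az: "a = s *\<^sub>R z" unfolding a_def z_def \<sigma>_def by simp
  have aS: "Sset c a = Sset c b" and aZ: "Zset a = Zset b" unfolding a_def using scale_SZ[OF sig] by auto
  have ann: "nonneg a" unfolding a_def using b(1) sig unfolding nonneg_def by simp
  have anz: "a \<noteq> 0" unfolding a_def using sig bnz by simp
  have "a \<in> gamma1 c"
    unfolding gamma1_def
  proof (intro CollectI conjI allI impI)
    show "nonneg a" by (rule ann)
    show "primitive_int a" unfolding az by (rule s(2))
    fix b' assume H: "nonneg b' \<and> gammaf c b' = gammaf c a"
    have "b' \<in> Eset c a" using claim1[OF fin ne ann] H by blast
    then have "b' \<in> Eset c b" using Eset_cong[OF aS aZ] by simp
    then obtain t' where t': "b' = t' *\<^sub>R b" using ray by blast
    have "b' \<noteq> 0" using claim_nz[OF fin ne ann anz] H by blast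
    then have t'nz: "t' \<noteq> 0" using t' by auto
    obtain i where i: "b $ i \<noteq> 0" using bnz by (auto simp: vec_eq_iff)
    have bi: "b $ i > 0" using i b(1) unfolding nonneg_def by (metis less_eq_real_def)
    have "b' $ i \<ge> 0" using H nonneg_def by blast
    then have "t' * b $ i \<ge> 0" using t' by simp
    then have "t' \<ge> 0" using bi by (simp add: zero_le_mult_iff)
    then have t'pos: "t' > 0" using t'nz by simp
    show "\<exists>t>0. b' = t *\<^sub>R a"
      by (rule exI[of _ "t' / \<sigma>"]) (use t'pos sig t' in \<open>simp add: a_def\<close>)
  qed
  moreover have "a \<bullet> p > 0" unfolding a_def using sig b(4) by simp
  ultimately show ?thesis using aS aZ b(2,3) by blast
qed

end


abbreviation one :: "real^'n::finite" where "one \<equiv> (\<chi> i. 1)"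

lemma sa_inner: "sa a = a \<bullet> one"
  unfolding sa_def inner_vec_def by simp

lemma g1_nonneg: "a \<in> gamma1_plus c \<Longrightarrow> nonneg a"
  unfolding gamma1_plus_def gamma1_def by auto
lemma g1_pos: "a \<in> gamma1_plus c \<Longrightarrow> mf c a > 0"
  unfolding gamma1_plus_def by auto
lemma g1_nz: "a \<in> gamma1_plus c \<Longrightarrow> a \<noteq> 0"
  unfolding gamma1_plus_def gamma1_def primitive_int_def by auto

lemma sa_nonneg: "nonneg a \<Longrightarrow> sa a \<ge> 0"
  unfolding sa_def nonneg_def by (simp add: sum_nonneg)

lemma bdd_LE: "bdd_above ({0} \<union> {1 - sa a / mf c a | a. a \<in> gamma1_plus c})"
proof (rule bdd_aboveI[of _ 1])
  fix x assume "x \<in> {0} \<union> {1 - sa a / mf c a | a. a \<in> gamma1_plus c}"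
  then consider "x = 0" | a where "a \<in> gamma1_plus c" "x = 1 - sa a / mf c a" by auto
  then show "x \<le> 1"
  proof cases
    case 1 then show ?thesis by simp
  next
    case 2
    have "sa a / mf c a \<ge> 0" using sa_nonneg[OF g1_nonneg[OF 2(1)]] g1_pos[OF 2(1)] by simp
    then show ?thesis using 2 by simp
  qed
qed

lemma LE_zero:
  assumes "\<And>a. a \<in> gamma1_plus c \<Longrightarrow> 1 - sa a / mf c a \<le> 0"
  shows "leading_exponent c = 0"
  unfolding leading_exponent_def
  by (rule cSup_eq_maximum) (use assms in auto)

lemma LE_ge: "a \<in> gamma1_plus c \<Longrightarrow> 1 - sa a / mf c a \<le> leading_exponent c"
  unfolding leading_exponent_def by (rule cSup_upper) (use bdd_LE in auto)

lemma nonneg_inner_pos: assumes "nonneg a" "a \<noteq> 0" shows "a \<bullet> one > 0"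
proof -
  obtain i where i: "a $ i \<noteq> 0" using assms(2) by (auto simp: vec_eq_iff)
  have ai: "a $ i > 0" using i assms(1) unfolding nonneg_def by (metis less_eq_real_def)
  have "a $ i \<le> (\<Sum>j\<in>UNIV. a $ j)" using assms(1) unfolding nonneg_def by (intro member_le_sum) auto
  then show ?thesis using ai sa_inner[of a] unfolding sa_def by simp
qed

context
  fixes c :: "('n::finite \<Rightarrow> nat) \<Rightarrow> real"
  assumes fin: "finite (supp c)" and ne: "supp c \<noteq> {}"
begin

lemma convex_NP: "convex (newton_polyhedron c)"
  unfolding newton_polyhedron_def by simp

lemma closed_NP: "closed (newton_polyhedron c)"
proof -
  have cpt: "compact (convex hull (UU c))" using fin_U[OF fin ne] by (rule finite_imp_compact_convex_hull)
  have "newton_polyhedron c = (\<Union>x\<in>Orth. \<Union>y\<in>convex hull (UU c). {x + y})"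
    unfolding NP_eq set_plus_def by (auto simp: add.commute) (metis add.commute)
  then show ?thesis using closed_compact_sums[OF closed_Orth cpt] by simp
qed

lemma part1: assumes "one \<notin> newton_polyhedron c" shows "leading_exponent c > 0"
proof -
  obtain a \<beta> where ab: "a \<bullet> one < \<beta>" "\<And>x. x \<in> newton_polyhedron c \<Longrightarrow> \<beta> < a \<bullet> x"
    using separating_hyperplane_closed_point[OF convex_NP closed_NP assms] by blast
  have ann: "nonneg a" unfolding nonneg_def
  proof
    fix i show "0 \<le> a $ i"
    proof (rule ccontr)
      assume "\<not> 0 \<le> a $ i"
      then have ai: "a $ i < 0" by simp
      obtain u where u: "u \<in> UU c" using ne_U[OF fin ne] by blast
      define t where "t = \<bar>a \<bullet> u - \<beta>\<bar> / (- a $ i)"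
      have t0: "t \<ge> 0" unfolding t_def by (rule divide_nonneg_pos) (use ai in auto)
      have "nonneg (t *\<^sub>R axis i (1::real))" using t0 unfolding nonneg_def axis_def by simp
      then have "u + t *\<^sub>R axis i 1 \<in> newton_polyhedron c" using U_sub_P[OF u] P_plus by blast
      then have "\<beta> < a \<bullet> (u + t *\<^sub>R axis i 1)" by (rule ab(2))
      moreover have "a \<bullet> (u + t *\<^sub>R axis i 1) = a \<bullet> u + t * a $ i"
        by (simp add: inner_add_right inner_axis1)
      moreover have "t * a $ i = - \<bar>a \<bullet> u - \<beta>\<bar>"
        unfolding t_def using ai by (simp add: field_simps)
      ultimately show False by linarith
    qed
  qed
  obtain u0 where u0: "u0 \<in> UU c" "a \<bullet> u0 = mv c a" using mv_att[OF fin ne] by blast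
  have "\<beta> < a \<bullet> u0" using ab(2) U_sub_P[OF u0(1)] by blast
  then have ap: "a \<bullet> (u0 - one) > 0" using ab(1) by (simp add: inner_diff_right)
  obtain a' where a': "a' \<in> gamma1 c" "Sset c a \<subseteq> Sset c a'" "a' \<bullet> (u0 - one) > 0"
    using gamma1_exists[OF fin ne ann ap] by blast
  have a'nn: "nonneg a'" using a'(1) unfolding gamma1_def by auto
  have "u0 \<in> Sset c a" using u0 by (simp add: Sset_def)
  then have "a' \<bullet> u0 = mv c a'" using a'(2) by (auto simp: Sset_def)
  then have mf': "mf c a' = a' \<bullet> u0" using mf_eq[OF fin ne a'nn] by simp
  have sa': "sa a' = a' \<bullet> one" by (rule sa_inner)
  have s0: "sa a' \<ge> 0" using sa_nonneg[OF a'nn] .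
  have lt: "sa a' < mf c a'" using a'(3) mf' sa' by (simp add: inner_diff_right)
  then have mpos: "mf c a' > 0" using s0 by linarith
  have g: "a' \<in> gamma1_plus c" using a'(1) mpos unfolding gamma1_plus_def by simp
  have "sa a' / mf c a' < 1" using lt mpos by simp
  then have "1 - sa a' / mf c a' > 0" by simp
  then show ?thesis using LE_ge[OF g] by linarith
qed

lemma one_in_le: assumes "one \<in> newton_polyhedron c" "a \<in> gamma1_plus c"
  shows "1 - sa a / mf c a \<le> 0"
proof -
  have ann: "nonneg a" using g1_nonneg[OF assms(2)] .
  have "mf c a \<le> a \<bullet> one" using mf_eq[OF fin ne ann] mv_lower_P[OF fin ne ann assms(1)] by simp
  then have "mf c a \<le> sa a" by (simp only: sa_inner)
  then have "sa a / mf c a \<ge> 1" using g1_pos[OF assms(2)] by simp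
  then show ?thesis by simp
qed

lemma NP_unbounded: "\<not> bounded (newton_polyhedron c)"
proof
  assume "bounded (newton_polyhedron c)"
  then obtain B where B: "\<And>x. x \<in> newton_polyhedron c \<Longrightarrow> norm x \<le> B" unfolding bounded_iff by blast
  obtain u where u: "u \<in> UU c" using ne_U[OF fin ne] by blast
  define i :: 'n where "i = undefined"
  define t where "t = \<bar>B\<bar> + 1"
  have "nonneg (t *\<^sub>R axis i (1::real))" unfolding t_def nonneg_def axis_def by simp
  then have x: "u + t *\<^sub>R axis i 1 \<in> newton_polyhedron c" using U_sub_P[OF u] P_plus by blast
  have "u $ i \<ge> 0" using U_nonneg[OF u] nonneg_def by blast
  then have "(u + t *\<^sub>R axis i 1) $ i \<ge> t" by (simp add: axis_def)
  moreover have "\<bar>(u + t *\<^sub>R axis i 1) $ i\<bar> \<le> norm (u + t *\<^sub>R axis i 1)" by (rule component_le_norm_cart)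
  ultimately have "t \<le> norm (u + t *\<^sub>R axis i 1)" by linarith
  then show False using B[OF x] unfolding t_def by linarith
qed

lemma part2: assumes "one \<in> newton_boundary c"
  shows "leading_exponent c = 0 \<and> gamma1_max c \<noteq> {}"
proof -
  obtain \<gamma> where g: "\<gamma> face_of newton_polyhedron c" "compact \<gamma>" "one \<in> \<gamma>"
  proof -
    from assms obtain \<gamma> where "\<gamma> \<in> {\<gamma>. \<gamma> face_of newton_polyhedron c \<and> compact \<gamma>}" "one \<in> \<gamma>"
      unfolding newton_boundary_def by (rule UnionE)
    then show ?thesis by (intro that[of \<gamma>]) simp_all
  qed
  have oneP: "one \<in> newton_polyhedron c" using face_of_imp_subset[OF g(1)] g(3) by (rule subsetD)
  have neq: "\<gamma> \<noteq> newton_polyhedron c"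
  proof
    assume "\<gamma> = newton_polyhedron c"
    then have "bounded (newton_polyhedron c)" using compact_imp_bounded[OF g(2)] by simp
    then show False using NP_unbounded by simp
  qed
  have "one \<in> rel_frontier (newton_polyhedron c)" using face_of_subset_rel_frontier[OF g(1) neq] g(3) by (rule subsetD)
  then have nri: "one \<notin> rel_interior (newton_polyhedron c)" unfolding rel_frontier_def by simp
  obtain a where a: "a \<noteq> 0" "\<And>y. y \<in> newton_polyhedron c \<Longrightarrow> a \<bullet> one \<le> a \<bullet> y"
    by (rule supporting_hyperplane_rel_boundary[OF convex_NP oneP nri], rule that, assumption+)
  have ann: "nonneg a" unfolding nonneg_def
  proof
    fix i show "0 \<le> a $ i"
    proof (rule ccontr)
      assume "\<not> 0 \<le> a $ i"
      then have ai: "a $ i < 0" by simp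
      have "one + axis i 1 \<in> newton_polyhedron c" using P_plus[OF oneP nonneg_axis] .
      then have "a \<bullet> one \<le> a \<bullet> (one + axis i 1)" by (rule a(2))
      then show False using ai by (simp add: inner_add_right inner_axis1)
    qed
  qed
  obtain u1 where u1: "u1 \<in> UU c" "a \<bullet> u1 = mv c a" using mv_att[OF fin ne] by blast
  have mva: "mv c a = a \<bullet> one"
    using mv_lower_P[OF fin ne ann oneP] a(2)[OF U_sub_P[OF u1(1)]] u1(2) by linarith
  obtain h w where hw: "h \<in> convex hull (UU c)" "nonneg w" "one = h + w"
    using oneP unfolding NP_eq set_plus_def Orth_def by auto
  have ah: "a \<bullet> h \<ge> mv c a" using mv_lower_hull[OF fin ne hw(1)] .
  have aw: "a \<bullet> w \<ge> 0" using inner_nonneg_nonneg[OF ann hw(2)] .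
  have "a \<bullet> one = a \<bullet> h + a \<bullet> w" using hw(3) by (simp add: inner_add_right)
  then have ah': "a \<bullet> h = mv c a" and aw': "a \<bullet> w = 0" using ah aw mva by linarith+
  have aiwi: "a $ i * w $ i = 0" for i
  proof -
    have "(\<Sum>j\<in>UNIV. a $ j * w $ j) = 0" using aw' unfolding inner_vec_def by simp
    moreover have "\<forall>j\<in>UNIV. 0 \<le> a $ j * w $ j" using ann hw(2) unfolding nonneg_def by simp
    ultimately show ?thesis using sum_nonneg_eq_0_iff[of UNIV "\<lambda>j. a $ j * w $ j"] by simp
  qed
  obtain lam where lam: "\<And>u. u \<in> UU c \<Longrightarrow> 0 \<le> lam u" "sum lam (UU c) = 1" "(\<Sum>u\<in>UU c. lam u *\<^sub>R u) = h"
  proof -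
    have "h \<in> {y. \<exists>u. (\<forall>x\<in>UU c. 0 \<le> u x) \<and> sum u (UU c) = 1 \<and> (\<Sum>x\<in>UU c. u x *\<^sub>R x) = y}"
      using hw(1) convex_hull_finite[OF fin_U[OF fin ne]] by simp
    then obtain u where U: "\<forall>x\<in>UU c. 0 \<le> u x" "sum u (UU c) = 1" "(\<Sum>x\<in>UU c. u x *\<^sub>R x) = h"
      by (auto simp only: mem_Collect_eq)
    show ?thesis using U by (intro that[of u]) auto
  qed
  have hinner: "x \<bullet> h = (\<Sum>u\<in>UU c. lam u * (x \<bullet> u))" for x
    unfolding lam(3)[symmetric] by (simp add: inner_sum_right)
  have lamS: "lam u = 0 \<or> u \<in> Sset c a" if u: "u \<in> UU c" for u
  proof -
    have "(\<Sum>v\<in>UU c. lam v * (a \<bullet> v - mv c a)) = (\<Sum>v\<in>UU c. lam v * (a \<bullet> v)) - (\<Sum>v\<in>UU c. lam v) * mv c a"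
      by (simp add: right_diff_distrib sum_subtractf sum_distrib_right)
    also have "\<dots> = a \<bullet> h - mv c a" using lam(2) hinner[of a] by simp
    finally have "(\<Sum>v\<in>UU c. lam v * (a \<bullet> v - mv c a)) = a \<bullet> h - mv c a" .
    then have s0: "(\<Sum>v\<in>UU c. lam v * (a \<bullet> v - mv c a)) = 0" using ah' by simp
    have nn: "\<forall>v\<in>UU c. 0 \<le> lam v * (a \<bullet> v - mv c a)"
    proof
      fix v assume v: "v \<in> UU c"
      have "0 \<le> a \<bullet> v - mv c a" using mv_le[OF fin ne v, of a] by simp
      then show "0 \<le> lam v * (a \<bullet> v - mv c a)" using lam(1)[OF v] by (rule mult_nonneg_nonneg[rotated])
    qed
    have "\<forall>v\<in>UU c. lam v * (a \<bullet> v - mv c a) = 0"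
      using iffD1[OF sum_nonneg_eq_0_iff[OF fin_U[OF fin ne] nn[rule_format]] s0] .
    then have "lam u * (a \<bullet> u - mv c a) = 0" using u by blast
    then show ?thesis using u by (auto simp: Sset_def)
  qed
  have K: "mv c b = b \<bullet> one" if b: "nonneg b" "Sset c a \<subseteq> Sset c b" "Zset a \<subseteq> Zset b" for b
  proof -
    have bw: "b \<bullet> w = 0"
    proof -
      have "b $ i * w $ i = 0" for i
      proof (cases "w $ i = 0")
        case False
        then have "a $ i = 0" using aiwi[of i] by simp
        then have "b $ i = 0" using b(3) by (auto simp: Zset_def)
        then show ?thesis by simp
      qed simp
      then have "(\<Sum>i\<in>UNIV. b $ i * w $ i) = 0" by (intro sum.neutral) blast
      then show ?thesis unfolding inner_vec_def by simp
    qed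
    have "(\<Sum>v\<in>UU c. lam v * (b \<bullet> v - mv c b)) = 0"
    proof (rule sum.neutral, rule ballI)
      fix v assume v: "v \<in> UU c"
      show "lam v * (b \<bullet> v - mv c b) = 0"
        using lamS[OF v] b(2) by (auto simp: Sset_def)
    qed
    moreover have "(\<Sum>v\<in>UU c. lam v * (b \<bullet> v - mv c b)) = (\<Sum>v\<in>UU c. lam v * (b \<bullet> v)) - (\<Sum>v\<in>UU c. lam v) * mv c b"
      by (simp add: right_diff_distrib sum_subtractf sum_distrib_right)
    moreover have "(\<Sum>v\<in>UU c. lam v * (b \<bullet> v)) - (\<Sum>v\<in>UU c. lam v) * mv c b = b \<bullet> h - mv c b"
      using lam(2) hinner[of b] by simp
    ultimately have "b \<bullet> h = mv c b" by simp
    then show ?thesis using bw hw(3) by (simp add: inner_add_right)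
  qed
  have ap: "a \<bullet> one > 0" using nonneg_inner_pos[OF ann a(1)] .
  obtain a' where a': "a' \<in> gamma1 c" "Sset c a \<subseteq> Sset c a'" "Zset a \<subseteq> Zset a'" "a' \<bullet> one > 0"
    using gamma1_exists[OF fin ne ann ap] by blast
  have a'nn: "nonneg a'" using a'(1) unfolding gamma1_def by auto
  have mf1: "mf c a' = a' \<bullet> one" using K[OF a'nn a'(2,3)] mf_eq[OF fin ne a'nn] by simp
  then have mf': "mf c a' = sa a'" by (simp only: sa_inner)
  have pos: "mf c a' > 0" using mf1 a'(4) by simp
  have g: "a' \<in> gamma1_plus c" using a'(1) pos unfolding gamma1_plus_def by simp
  have LE: "leading_exponent c = 0" by (rule LE_zero) (rule one_in_le[OF oneP])
  have "1 - sa a' / mf c a' = 0" using mf' pos by simp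
  then have "a' \<in> gamma1_max c" using g LE unfolding gamma1_max_def by simp
  then show ?thesis using LE by blast
qed

lemma part3: assumes "one \<in> interior (newton_polyhedron c)"
  shows "leading_exponent c = 0 \<and> gamma1_max c = {}"
proof -
  have oneP: "one \<in> newton_polyhedron c" using assms interior_subset by blast
  obtain e where e: "e > 0" "ball one e \<subseteq> newton_polyhedron c" using assms mem_interior by blast
  have neg: "1 - sa a / mf c a < 0" if a: "a \<in> gamma1_plus c" for a
  proof -
    have ann: "nonneg a" using g1_nonneg[OF a] .
    have anz: "a \<noteq> 0" using g1_nz[OF a] .
    have na: "norm a > 0" using anz by simp
    define y where "y = one - (e / (2 * norm a)) *\<^sub>R a"
    have "dist one y = e / 2" unfolding y_def dist_norm using na e(1) by simp
    then have "y \<in> newton_polyhedron c" using e by auto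
    then have "mv c a \<le> a \<bullet> y" using mv_lower_P[OF fin ne ann] by blast
    moreover have "a \<bullet> y = a \<bullet> one - (e / (2 * norm a)) * (a \<bullet> a)"
      unfolding y_def by (simp add: inner_diff_right)
    moreover have "a \<bullet> a = norm a * norm a" by (simp add: power2_norm_eq_inner[symmetric] power2_eq_square)
    moreover have "(e / (2 * norm a)) * (norm a * norm a) = e / 2 * norm a" using na by (simp add: field_simps)
    ultimately have ay: "mv c a \<le> a \<bullet> one - e / 2 * norm a" by simp
    moreover have "e / 2 * norm a > 0" using e(1) na by simp
    moreover have "mf c a = mv c a" using mf_eq[OF fin ne ann] .
    moreover have "sa a = a \<bullet> one" by (rule sa_inner)
    ultimately have "mf c a < sa a" by linarith
    then have "sa a / mf c a > 1" using g1_pos[OF a] by simp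
    then show ?thesis by simp
  qed
  have LE: "leading_exponent c = 0" by (rule LE_zero) (use neg in fastforce)
  have "gamma1_max c = {}" unfolding gamma1_max_def LE using neg by fastforce
  then show ?thesis using LE by blast
qed

end

theorem mainTheorem4:
  fixes c :: "('n::finite \<Rightarrow> nat) \<Rightarrow> real"
  assumes fin: "finite (supp c)"
    and nonzero: "supp c \<noteq> {}"
    and nd: "nondegenerate c"
    and f0: "peval c 0 = 0"
  shows "((\<chi> i. 1) \<notin> newton_polyhedron c \<longrightarrow> leading_exponent c > 0)
       \<and> ((\<chi> i. 1) \<in> newton_boundary c \<longrightarrow> leading_exponent c = 0 \<and> gamma1_max c \<noteq> {})
       \<and> ((\<chi> i. 1) \<in> interior (newton_polyhedron c) \<longrightarrow>
            leading_exponent c = 0 \<and> gamma1_max c = {})"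
  using part1[OF fin nonzero] part2[OF fin nonzero] part3[OF fin nonzero] by blast


end
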